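(* Let $\{w^k\}$ be the sequence of points produced by Algorithm CMA Light (described in the context) applied to $f=\sum_{i=1}^P f_i$ under the standing assumptions. Then $\{w^k\}$ is bounded.
   Context: Standing assumptions: $f_1,\dots,f_P:\mathbb{R}^n\to\mathbb{R}$ are continuously differentiable and $f=\sum_{i=1}^P f_i$; (A1) for every $w_0$ the level set $\{w: f(w)\le f(w_0)\}$ is compact; (A2) each $\nabla f_p$ is Lipschitz continuous with a common constant $L>0$; (A3) each $f_p$ is nonnegative and has compact level sets. $\texttt{Inner\_Cycle}(w,\zeta)$: set $\widetilde w_0=w$; for $i=1,\dots,P$: $\tilde f_i=f_i(\widetilde w_{i-1})$, $\tilde d_i=-\nabla f_i(\widetilde w_{i-1})$, $\widetilde w_i=\widetilde w_{i-1}+\zeta\tilde d_i$; output $\widetilde w=\widetilde w_P$, $d=\sum_i\tilde d_i$, $\tilde f=\sum_i\tilde f_i$. $\texttt{EDFL\_Light}(F,w,d,\zeta;\gamma,\delta)$: set $j=0,\alpha=\zeta,f_0=F$. If $F>f(w)-\gamma\alpha\|d\|^2$ return $\alpha=0$. Otherwise, while $f(w+(\alpha/\delta)d)\le\min\{f(w)-\gamma\alpha\|d\|^2,f_j\}$ set $f_{j+1}=f(w+(\alpha/\delta)d)$, $j\leftarrow j+1$, $\alpha\leftarrow\alpha/\delta$. Return $\alpha$ and $f(w+\alpha d)$. Algorithm CMA Light: parameters $\zeta^0>0$, $\theta\in(0,1)$, $\tau>0$, $\gamma\in(0,1)$, $\delta\in(0,1)$; $w^0\in\mathbb{R}^n$;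 set $\tilde f^0=f(w^0)$, $\phi^0=\tilde f^0$. For $k=0,1,\dots$: (1) $(\widetilde w^k,d^k,\tilde f^{k+1})=\texttt{Inner\_Cycle}(w^k,\zeta^k)$. (2) If $\tilde f^{k+1}\le\min\{\phi^k-\gamma\zeta^k,f(w^0)\}$: set $\zeta^{k+1}=\zeta^k$, $\alpha^k=\zeta^k$, $\phi^{k+1}=\tilde f^{k+1}$. (3) Else, if $\|d^k\|\le\tau\zeta^k$: set $\zeta^{k+1}=\theta\zeta^k$, $\alpha^k=\zeta^k$ if $\tilde f^{k+1}\le f(w^0)$ and $\alpha^k=0$ otherwise, and $\phi^{k+1}=\phi^k$. (4) Else: $(\widetilde\alpha^k,\hat f^{k+1})=\texttt{EDFL\_Light}(\tilde f^{k+1},w^k,d^k,\zeta^k;\gamma,\delta)$. If $\widetilde\alpha^k\|d^k\|^2\le\tau\zeta^k$: $\zeta^{k+1}=\theta\zeta^k$ and $\alpha^k=\widetilde\alpha^k$ if $\widetilde\alpha^k>0$ and $\hat f^{k+1}\le f(w^0)$; $\alpha^k=\zeta^k$ if $\widetilde\alpha^k=0$ and $\tilde f^{k+1}\le f(w^0)$; $\alpha^k=0$ otherwise. Else: $\zeta^{k+1}=\zeta^k$ and $\alpha^k=\widetilde\alpha^k$ if $\widetilde\alpha^k>0$ and $\hat f^{k+1}\le f(w^0)$, $\alpha^k=0$ otherwise. In both subcases set $\phi^{k+1}=\min\{\hat f^{k+1},\tilde f^{k+1},\phi^k\}$. (5) Set $w^{k+1}=w^k+\alpha^k d^k$. *)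

theory Defs
  imports "HOL-Analysis.Analysis"
begin

text \<open>Components f_1,...,f_P are given as fs :: nat => 'a => real (only indices 1..P matter),
  their gradients as g :: nat => 'a => 'a.\<close>

definition obj :: "(nat \<Rightarrow> 'a \<Rightarrow> real) \<Rightarrow> nat \<Rightarrow> 'a \<Rightarrow> real" where
  "obj fs P w = (\<Sum>i=1..P. fs i w)"

fun inner_pt :: "(nat \<Rightarrow> 'a \<Rightarrow> 'a::real_vector) \<Rightarrow> 'a \<Rightarrow> real \<Rightarrow> nat \<Rightarrow> 'a" where
  "inner_pt g w \<zeta> 0 = w"
| "inner_pt g w \<zeta> (Suc i) = inner_pt g w \<zeta> i + \<zeta> *\<^sub>R (- g (Suc i) (inner_pt g w \<zeta> i))"

definition inner_dir :: "(nat \<Rightarrow> 'a \<Rightarrow> 'a::real_vector) \<Rightarrow> nat \<Rightarrow> 'a \<Rightarrow> real \<Rightarrow> 'a" where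
  "inner_dir g P w \<zeta> = (\<Sum>i=1..P. - g i (inner_pt g w \<zeta> (i - 1)))"

definition inner_fval :: "(nat \<Rightarrow> 'a \<Rightarrow> real) \<Rightarrow> (nat \<Rightarrow> 'a \<Rightarrow> 'a::real_vector) \<Rightarrow> nat \<Rightarrow> 'a \<Rightarrow> real \<Rightarrow> real" where
  "inner_fval fs g P w \<zeta> = (\<Sum>i=1..P. fs i (inner_pt g w \<zeta> (i - 1)))"

text \<open>After j successful loop iterations alpha = zeta/delta^j and the stored value
  f_j is F (j = 0) or f(w + (zeta/delta^j) d) (j > 0).\<close>
definition edfl_cond :: "('a::real_normed_vector \<Rightarrow> real) \<Rightarrow> real \<Rightarrow> 'a \<Rightarrow> 'a \<Rightarrow> real \<Rightarrow> real \<Rightarrow> real \<Rightarrow> nat \<Rightarrow> bool" where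
  "edfl_cond f F w d \<zeta> \<gamma> \<delta> j \<longleftrightarrow>
     f (w + (\<zeta> / \<delta> ^ Suc j) *\<^sub>R d)
       \<le> min (f w - \<gamma> * (\<zeta> / \<delta> ^ j) * (norm d)\<^sup>2)
             (if j = 0 then F else f (w + (\<zeta> / \<delta> ^ j) *\<^sub>R d))"

text \<open>Step size returned by EDFL_Light (the returned function value is f(w + alpha d)).\<close>
definition edfl_alpha :: "('a::real_normed_vector \<Rightarrow> real) \<Rightarrow> real \<Rightarrow> 'a \<Rightarrow> 'a \<Rightarrow> real \<Rightarrow> real \<Rightarrow> real \<Rightarrow> real" where
  "edfl_alpha f F w d \<zeta> \<gamma> \<delta> =
     (if F > f w - \<gamma> * \<zeta> * (norm d)\<^sup>2 then 0
      else \<zeta> / \<delta> ^ (LEAST j. \<not> edfl_cond f F w d \<zeta> \<gamma> \<delta> j))"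

text \<open>One iteration of CMA Light on the state (w^k, zeta^k, phi^k); f0 = f(w^0).\<close>
definition cma_step :: "(nat \<Rightarrow> 'a \<Rightarrow> real) \<Rightarrow> (nat \<Rightarrow> 'a \<Rightarrow> 'a::real_normed_vector) \<Rightarrow> nat
     \<Rightarrow> real \<Rightarrow> real \<Rightarrow> real \<Rightarrow> real \<Rightarrow> real \<Rightarrow> 'a \<times> real \<times> real \<Rightarrow> 'a \<times> real \<times> real" where
  "cma_step fs g P \<theta> \<tau> \<gamma> \<delta> f0 s =
     (case s of (w, \<zeta>, \<phi>) \<Rightarrow>
      let d = inner_dir g P w \<zeta>;
          tf = inner_fval fs g P w \<zeta>
      in if tf \<le> min (\<phi> - \<gamma> * \<zeta>) f0 then (w + \<zeta> *\<^sub>R d, \<zeta>, tf)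
         else if norm d \<le> \<tau> * \<zeta> then
           (w + (if tf \<le> f0 then \<zeta> else 0) *\<^sub>R d, \<theta> * \<zeta>, \<phi>)
         else
           let alt = edfl_alpha (obj fs P) tf w d \<zeta> \<gamma> \<delta>;
               hf = obj fs P (w + alt *\<^sub>R d);
               small = (alt * (norm d)\<^sup>2 \<le> \<tau> * \<zeta>);
               \<alpha> = (if small then
                      (if alt > 0 \<and> hf \<le> f0 then alt
                       else if alt = 0 \<and> tf \<le> f0 then \<zeta> else 0)
                    else (if alt > 0 \<and> hf \<le> f0 then alt else 0))
           in (w + \<alpha> *\<^sub>R d, if small then \<theta> * \<zeta> else \<zeta>, min hf (min tf \<phi>)))"

definition cma_state :: "(nat \<Rightarrow> 'a \<Rightarrow> real) \<Rightarrow> (nat \<Rightarrow> 'a \<Rightarrow> 'a::real_normed_vector) \<Rightarrow> nat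
     \<Rightarrow> real \<Rightarrow> real \<Rightarrow> real \<Rightarrow> real \<Rightarrow> real \<Rightarrow> 'a \<Rightarrow> nat \<Rightarrow> 'a \<times> real \<times> real" where
  "cma_state fs g P \<zeta>0 \<theta> \<tau> \<gamma> \<delta> w0 k =
     (cma_step fs g P \<theta> \<tau> \<gamma> \<delta> (obj fs P w0) ^^ k) (w0, \<zeta>0, obj fs P w0)"

definition cma_iter :: "(nat \<Rightarrow> 'a \<Rightarrow> real) \<Rightarrow> (nat \<Rightarrow> 'a \<Rightarrow> 'a::real_normed_vector) \<Rightarrow> nat
     \<Rightarrow> real \<Rightarrow> real \<Rightarrow> real \<Rightarrow> real \<Rightarrow> real \<Rightarrow> 'a \<Rightarrow> nat \<Rightarrow> 'a" where
  "cma_iter fs g P \<zeta>0 \<theta> \<tau> \<gamma> \<delta> w0 k = fst (cma_state fs g P \<zeta>0 \<theta> \<tau> \<gamma> \<delta> w0 k)"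

end

theory Submission imports Defs begin

lemma descent:
  fixes f :: "'a::real_inner \<Rightarrow> real"
  assumes d: "\<And>x. (f has_derivative (\<lambda>h. g x \<bullet> h)) (at x)"
    and lip: "\<And>x y. norm (g x - g y) \<le> L * norm (x - y)" and L: "L \<ge> 0"
  shows "f y \<le> f x + g x \<bullet> (y - x) + L/2 * (norm (y - x))\<^sup>2"
proof -
  define p where "p = y - x"
  define h where "h t = f (x + t *\<^sub>R p) - t * (g x \<bullet> p) - L/2 * t^2 * (norm p)\<^sup>2" for t
  have D: "(h has_real_derivative (g (x + t *\<^sub>R p) \<bullet> p - g x \<bullet> p - L * t * (norm p)\<^sup>2)) (at t)" for t
  proof -
    have "((\<lambda>t. f (x + t *\<^sub>R p)) has_derivative (\<lambda>s. g (x + t *\<^sub>R p) \<bullet> (s *\<^sub>R p))) (at t)"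
      by (rule has_derivative_compose[OF _ d]) (auto intro!: derivative_eq_intros)
    note hd = this
    have "((\<lambda>t. f (x + t *\<^sub>R p)) has_real_derivative (g (x + t *\<^sub>R p) \<bullet> p)) (at t)"
    proof -
      have eq: "(\<lambda>s. s * c) = (*) c" for c :: real by (auto simp: fun_eq_iff)
      show ?thesis using hd unfolding has_field_derivative_def by (simp add: eq)
    qed
    then show ?thesis unfolding h_def
      by (auto intro!: derivative_eq_intros simp: power2_eq_square algebra_simps)
  qed
  have "h 1 \<le> h 0"
  proof (rule DERIV_nonpos_imp_nonincreasing[of 0 1 h])
    fix t :: real assume t: "0 \<le> t" "t \<le> 1"
    have "g (x + t *\<^sub>R p) \<bullet> p - g x \<bullet> p = (g (x + t *\<^sub>R p) - g x) \<bullet> p" by (simp add: inner_diff_left)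
    also have "\<dots> \<le> norm (g (x + t *\<^sub>R p) - g x) * norm p" by (rule norm_cauchy_schwarz)
    also have "\<dots> \<le> L * norm (t *\<^sub>R p) * norm p"
      using lip[of "x + t *\<^sub>R p" x] by (simp add: mult_right_mono)
    also have "\<dots> = L * t * (norm p)\<^sup>2" using t by (simp add: power2_eq_square)
    finally show "\<exists>y. DERIV h t :> y \<and> y \<le> 0" using D by (intro exI[of _ "_ - _ - _"]) auto
  qed simp
  then show ?thesis unfolding h_def p_def by (simp add: algebra_simps)
qed

lemma grad_bound:
  fixes f :: "'a::real_inner \<Rightarrow> real"
  assumes d: "\<And>x. (f has_derivative (\<lambda>h. g x \<bullet> h)) (at x)"
    and lip: "\<And>x y. norm (g x - g y) \<le> L * norm (x - y)" and L: "L > 0"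
    and nn: "\<And>x. f x \<ge> 0"
  shows "(norm (g x))\<^sup>2 \<le> 2 * L * f x"
proof -
  have "f (x - (1/L) *\<^sub>R g x) \<le> f x + g x \<bullet> (x - (1/L) *\<^sub>R g x - x) + L/2 * (norm (x - (1/L) *\<^sub>R g x - x))\<^sup>2"
    by (rule descent[OF d lip]) (use L in auto)
  also have "\<dots> = f x - (norm (g x))\<^sup>2 / (2 * L)"
    using L by (simp add: power2_eq_square field_simps inner_commute flip: power2_norm_eq_inner)
  finally have "(norm (g x))\<^sup>2 + L * (2 * f (x - (1 / L) *\<^sub>R g x)) \<le> L * (f x * 2)"
    using L by (simp add: field_simps)
  moreover have "L * (2 * f (x - (1 / L) *\<^sub>R g x)) \<ge> 0" using nn L by simp
  ultimately show ?thesis by (simp add: algebra_simps)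
qed


theorem lemma3:
  fixes fs :: "nat \<Rightarrow> 'a::euclidean_space \<Rightarrow> real"
    and g :: "nat \<Rightarrow> 'a \<Rightarrow> 'a"
    and P :: nat and L \<zeta>0 \<theta> \<tau> \<gamma> \<delta> :: real and w0 :: 'a
  assumes grad: "\<And>i w. i \<in> {1..P} \<Longrightarrow> (fs i has_derivative (\<lambda>h. g i w \<bullet> h)) (at w)"
    and grad_cont: "\<And>i. i \<in> {1..P} \<Longrightarrow> continuous_on UNIV (g i)"
    and A1: "\<And>v. compact {w. obj fs P w \<le> obj fs P v}"
    and L_pos: "L > 0"
    and A2: "\<And>i x y. i \<in> {1..P} \<Longrightarrow> norm (g i x - g i y) \<le> L * norm (x - y)"
    and A3_nonneg: "\<And>i w. i \<in> {1..P} \<Longrightarrow> fs i w \<ge> 0"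
    and A3_level: "\<And>i v. i \<in> {1..P} \<Longrightarrow> compact {w. fs i w \<le> fs i v}"
    and \<zeta>0_pos: "\<zeta>0 > 0"
    and \<theta>: "0 < \<theta>" "\<theta> < 1"
    and \<tau>: "\<tau> > 0"
    and \<gamma>: "0 < \<gamma>" "\<gamma> < 1"
    and \<delta>: "0 < \<delta>" "\<delta> < 1"
  shows "bounded (range (cma_iter fs g P \<zeta>0 \<theta> \<tau> \<gamma> \<delta> w0))"
proof -
  define f0 where "f0 = obj fs P w0"
  define G where "G = sqrt (2 * L * f0)"
  define c1 where "c1 = real P * G / \<gamma>"
  define c2 where "c2 = (\<tau> * \<zeta>0 + real P * G) / (1 - \<theta>)"
  have obj_nn: "obj fs P w \<ge> 0" for w
    unfolding obj_def by (rule sum_nonneg) (use A3_nonneg in auto)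
  have tf_nn: "inner_fval fs g P w \<zeta> \<ge> 0" for w \<zeta>
    unfolding inner_fval_def by (rule sum_nonneg) (use A3_nonneg in auto)
  have f0_nn: "f0 \<ge> 0" unfolding f0_def by (rule obj_nn)
  have G_nn: "G \<ge> 0" unfolding G_def using f0_nn L_pos by simp
  have PG_nn: "real P * G \<ge> 0" using G_nn by simp
  have c1_nn: "c1 \<ge> 0" unfolding c1_def using PG_nn \<gamma> by simp
  have c1_eq: "c1 * \<gamma> = real P * G" unfolding c1_def using \<gamma> by simp
  have c2_eq: "c2 * (1 - \<theta>) = \<tau> * \<zeta>0 + real P * G" unfolding c2_def using \<theta> by simp
  have c2_nn: "c2 \<ge> 0" unfolding c2_def using \<theta> \<tau> \<zeta>0_pos PG_nn by simp
  have dbound: "norm (inner_dir g P w \<zeta>) \<le> real P * G" if tf: "inner_fval fs g P w \<zeta> \<le> f0" for w \<zeta>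
  proof -
    have "norm (- g i (inner_pt g w \<zeta> (i - 1))) \<le> G" if i: "i \<in> {1..P}" for i
    proof -
      have "fs i (inner_pt g w \<zeta> (i - 1)) \<le> inner_fval fs g P w \<zeta>"
        unfolding inner_fval_def by (rule member_le_sum) (use i A3_nonneg in auto)
      also have "\<dots> \<le> f0" by (rule tf)
      finally have le: "fs i (inner_pt g w \<zeta> (i - 1)) \<le> f0" .
      have "(norm (g i (inner_pt g w \<zeta> (i - 1))))\<^sup>2 \<le> 2 * L * fs i (inner_pt g w \<zeta> (i - 1))"
        by (rule grad_bound[OF grad A2 L_pos A3_nonneg]) (use i in auto)
      also have "\<dots> \<le> 2 * L * f0" using le L_pos by simp
      finally show ?thesis unfolding G_def by (simp add: real_le_rsqrt)
    qed
    then have "(\<Sum>i=1..P. norm (- g i (inner_pt g w \<zeta> (i - 1)))) \<le> (\<Sum>i=1..P. G)"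
      by (rule sum_mono)
    moreover have "norm (inner_dir g P w \<zeta>) \<le> (\<Sum>i=1..P. norm (- g i (inner_pt g w \<zeta> (i - 1))))"
      unfolding inner_dir_def by (rule norm_sum)
    ultimately show ?thesis by simp
  qed
  define Inv where "Inv s \<longleftrightarrow> (case s of (w, \<zeta>, \<phi>) \<Rightarrow> 0 \<le> \<zeta> \<and> \<zeta> \<le> \<zeta>0 \<and> 0 \<le> \<phi> \<and> \<phi> \<le> f0 \<and>
      (\<exists>u. obj fs P u \<le> f0 \<and> norm (w - u) \<le> c1 * (f0 - \<phi>) + c2 * (\<zeta>0 - \<zeta>)))" for s
  have step: "Inv (cma_step fs g P \<theta> \<tau> \<gamma> \<delta> f0 (w, \<zeta>, \<phi>))" if I: "Inv (w, \<zeta>, \<phi>)" for w \<zeta> \<phi>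
  proof -
    from I have z: "0 \<le> \<zeta>" "\<zeta> \<le> \<zeta>0" and ph: "0 \<le> \<phi>" "\<phi> \<le> f0"
      and "\<exists>u. obj fs P u \<le> f0 \<and> norm (w - u) \<le> c1 * (f0 - \<phi>) + c2 * (\<zeta>0 - \<zeta>)"
      unfolding Inv_def by auto
    then obtain u where u: "obj fs P u \<le> f0" and wu: "norm (w - u) \<le> c1 * (f0 - \<phi>) + c2 * (\<zeta>0 - \<zeta>)"
      by blast
    define d where "d = inner_dir g P w \<zeta>"
    define tf where "tf = inner_fval fs g P w \<zeta>"
    have tf0: "tf \<ge> 0" unfolding tf_def by (rule tf_nn)
    show ?thesis
    proof (cases "tf \<le> min (\<phi> - \<gamma> * \<zeta>) f0")
      case True
      then have eq: "cma_step fs g P \<theta> \<tau> \<gamma> \<delta> f0 (w, \<zeta>, \<phi>) = (w + \<zeta> *\<^sub>R d, \<zeta>, tf)"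
        by (simp add: cma_step_def Let_def d_def tf_def)
      have nd: "norm d \<le> real P * G" unfolding d_def by (rule dbound) (use True tf_def in auto)
      have "norm (w + \<zeta> *\<^sub>R d - u) \<le> norm (w - u) + \<zeta> * norm d"
        using norm_triangle_ineq[of "w - u" "\<zeta> *\<^sub>R d"] z by (simp add: algebra_simps)
      also have "\<dots> \<le> c1 * (f0 - \<phi>) + c2 * (\<zeta>0 - \<zeta>) + \<zeta> * (real P * G)"
        using wu nd z mult_left_mono by fastforce
      also have "\<dots> = c1 * (f0 - \<phi> + \<gamma> * \<zeta>) + c2 * (\<zeta>0 - \<zeta>)"
        using c1_eq by (simp add: algebra_simps)
      also have "\<dots> \<le> c1 * (f0 - tf) + c2 * (\<zeta>0 - \<zeta>)"
      proof -
        have "f0 - \<phi> + \<gamma> * \<zeta> \<le> f0 - tf" using True by simp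
        from mult_left_mono[OF this c1_nn] show ?thesis by simp
      qed
      finally show ?thesis unfolding eq Inv_def using z tf0 True u by auto
    next
      case nA: False
      show ?thesis
      proof (cases "norm d \<le> \<tau> * \<zeta>")
        case True
        define a where "a = (if tf \<le> f0 then \<zeta> else 0)"
        have eq: "cma_step fs g P \<theta> \<tau> \<gamma> \<delta> f0 (w, \<zeta>, \<phi>) = (w + a *\<^sub>R d, \<theta> * \<zeta>, \<phi>)"
          unfolding cma_step_def Let_def prod.case d_def[symmetric] tf_def[symmetric]
          using nA True by (auto simp: a_def)
        have a: "0 \<le> a" "a \<le> \<zeta>" using z by (auto simp: a_def)
        have "norm (w + a *\<^sub>R d - u) \<le> norm (w - u) + a * norm d"
          using norm_triangle_ineq[of "w - u" "a *\<^sub>R d"] a by (simp add: algebra_simps)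
        also have "a * norm d \<le> \<zeta> * (\<tau> * \<zeta>)" using a True z by (intro mult_mono) auto
        also have "\<zeta> * (\<tau> * \<zeta>) \<le> \<zeta> * (\<tau> * \<zeta>0)" using z \<tau> by (simp add: mult_left_mono)
        also have "\<dots> \<le> \<zeta> * (\<tau> * \<zeta>0 + real P * G)" using z PG_nn by (simp add: mult_left_mono)
        also have "\<dots> = c2 * (\<zeta> - \<theta> * \<zeta>)" using arg_cong[OF c2_eq, of "\<lambda>x. \<zeta> * x"] by (simp add: algebra_simps)
        finally have "norm (w + a *\<^sub>R d - u) \<le> c1 * (f0 - \<phi>) + c2 * (\<zeta>0 - \<theta> * \<zeta>)"
          using wu by (simp add: algebra_simps)
        moreover have "\<theta> * \<zeta> \<le> \<zeta>0" "0 \<le> \<theta> * \<zeta>" using z \<theta> mult_right_mono[of \<theta> 1 \<zeta>] by auto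
        ultimately show ?thesis unfolding eq Inv_def using ph u by auto
      next
        case nB: False
        define alt where "alt = edfl_alpha (obj fs P) tf w d \<zeta> \<gamma> \<delta>"
        define hf where "hf = obj fs P (w + alt *\<^sub>R d)"
        define small where "small = (alt * (norm d)\<^sup>2 \<le> \<tau> * \<zeta>)"
        define \<alpha> where "\<alpha> = (if small then
                      (if alt > 0 \<and> hf \<le> f0 then alt
                       else if alt = 0 \<and> tf \<le> f0 then \<zeta> else 0)
                    else (if alt > 0 \<and> hf \<le> f0 then alt else 0))"
        define z' where "z' = (if small then \<theta> * \<zeta> else \<zeta>)"
        have eq: "cma_step fs g P \<theta> \<tau> \<gamma> \<delta> f0 (w, \<zeta>, \<phi>) = (w + \<alpha> *\<^sub>R d, z', min hf (min tf \<phi>))"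
          unfolding cma_step_def Let_def prod.case d_def[symmetric] tf_def[symmetric] alt_def[symmetric]
            hf_def[symmetric] small_def[symmetric] \<alpha>_def[symmetric] z'_def[symmetric]
          by (simp only: if_not_P[OF nA] if_not_P[OF nB])
        have z': "0 \<le> z'" "z' \<le> \<zeta>" using z \<theta> mult_right_mono[of \<theta> 1 \<zeta>] by (auto simp: z'_def)
        have ph': "0 \<le> min hf (min tf \<phi>)" "min hf (min tf \<phi>) \<le> \<phi>"
          using ph tf0 obj_nn[of "w + alt *\<^sub>R d"] by (auto simp: hf_def)
        have bud: "c1 * (f0 - \<phi>) + c2 * (\<zeta>0 - \<zeta>) \<le> c1 * (f0 - min hf (min tf \<phi>)) + c2 * (\<zeta>0 - z')"
          using ph' z' by (intro add_mono mult_left_mono[OF _ c1_nn] mult_left_mono[OF _ c2_nn]) auto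
        have bud_nn: "0 \<le> c1 * (f0 - min hf (min tf \<phi>)) + c2 * (\<zeta>0 - z')"
          using ph' ph z' z c1_nn c2_nn by simp
        have cases: "(\<alpha> = alt \<and> hf \<le> f0) \<or> (\<alpha> = \<zeta> \<and> small \<and> tf \<le> f0) \<or> \<alpha> = 0"
          by (auto simp: \<alpha>_def)
        have "\<exists>u. obj fs P u \<le> f0 \<and> norm (w + \<alpha> *\<^sub>R d - u) \<le> c1 * (f0 - min hf (min tf \<phi>)) + c2 * (\<zeta>0 - z')"
        proof -
          { assume c: "\<alpha> = alt" "hf \<le> f0"
            then have ?thesis using bud_nn by (intro exI[of _ "w + \<alpha> *\<^sub>R d"]) (auto simp: hf_def) }
          moreover
          { assume c: "\<alpha> = \<zeta>" "small" "tf \<le> f0"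
            have nd: "norm d \<le> real P * G" unfolding d_def by (rule dbound) (use c tf_def in auto)
            have "norm (w + \<alpha> *\<^sub>R d - u) \<le> norm (w - u) + \<zeta> * norm d"
              using norm_triangle_ineq[of "w - u" "\<zeta> *\<^sub>R d"] z c by (simp add: algebra_simps)
            also have "\<zeta> * norm d \<le> \<zeta> * (\<tau> * \<zeta>0 + real P * G)"
              using nd z mult_pos_pos[OF \<tau> \<zeta>0_pos] by (intro mult_left_mono) auto
            also have "\<dots> = c2 * (\<zeta> - \<theta> * \<zeta>)" using arg_cong[OF c2_eq, of "\<lambda>x. \<zeta> * x"] by (simp add: algebra_simps)
            finally have "norm (w + \<alpha> *\<^sub>R d - u) \<le> c1 * (f0 - \<phi>) + c2 * (\<zeta>0 - z')"
              using wu c by (simp add: algebra_simps z'_def)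
            also have "\<dots> \<le> c1 * (f0 - min hf (min tf \<phi>)) + c2 * (\<zeta>0 - z')"
              using ph' by (intro add_mono mult_left_mono[OF _ c1_nn]) auto
            finally have ?thesis using u by blast }
          moreover
          { assume c: "\<alpha> = 0"
            then have ?thesis using u wu bud by (intro exI[of _ u]) auto }
          ultimately show ?thesis using cases by blast
        qed
        then show ?thesis unfolding eq Inv_def using z' z ph' ph by auto
      qed
    qed
  qed
  have inv: "Inv (cma_state fs g P \<zeta>0 \<theta> \<tau> \<gamma> \<delta> w0 k)" for k
  proof (induction k)
    case 0
    show ?case unfolding cma_state_def Inv_def f0_def using \<zeta>0_pos obj_nn
      by (auto intro!: exI[of _ w0])
  next
    case (Suc k)
    obtain w \<zeta> \<phi> where s: "cma_state fs g P \<zeta>0 \<theta> \<tau> \<gamma> \<delta> w0 k = (w, \<zeta>, \<phi>)" by (metis prod_cases3)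
    have "cma_state fs g P \<zeta>0 \<theta> \<tau> \<gamma> \<delta> w0 (Suc k) = cma_step fs g P \<theta> \<tau> \<gamma> \<delta> f0 (cma_state fs g P \<zeta>0 \<theta> \<tau> \<gamma> \<delta> w0 k)"
      unfolding cma_state_def f0_def by simp
    then show ?case using step Suc s by simp
  qed
  obtain R where R: "\<And>x. x \<in> {w. obj fs P w \<le> f0} \<Longrightarrow> norm x \<le> R"
    using compact_imp_bounded[OF A1[of w0]] unfolding bounded_iff f0_def by blast
  show ?thesis unfolding bounded_iff
  proof (intro exI[of _ "R + c1 * f0 + c2 * \<zeta>0"] ballI)
    fix x assume "x \<in> range (cma_iter fs g P \<zeta>0 \<theta> \<tau> \<gamma> \<delta> w0)"
    then obtain k where xk: "x = cma_iter fs g P \<zeta>0 \<theta> \<tau> \<gamma> \<delta> w0 k" by blast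
    obtain w \<zeta> \<phi> where s: "cma_state fs g P \<zeta>0 \<theta> \<tau> \<gamma> \<delta> w0 k = (w, \<zeta>, \<phi>)" by (metis prod_cases3)
    have x: "x = w" using xk s by (simp add: cma_iter_def)
    from inv[of k] s obtain u where u: "obj fs P u \<le> f0" and wu: "norm (w - u) \<le> c1 * (f0 - \<phi>) + c2 * (\<zeta>0 - \<zeta>)"
      and z: "0 \<le> \<zeta>" and ph: "0 \<le> \<phi>" unfolding Inv_def by auto
    have "c1 * (f0 - \<phi>) \<le> c1 * f0" using c1_nn ph by (simp add: mult_left_mono)
    moreover have "c2 * (\<zeta>0 - \<zeta>) \<le> c2 * \<zeta>0" using c2_nn z by (simp add: mult_left_mono)
    moreover have "norm w \<le> norm u + norm (w - u)" by (metis norm_triangle_sub)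
    ultimately show "norm x \<le> R + c1 * f0 + c2 * \<zeta>0" using R[of u] u wu x by auto
  qed
qed

end
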